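(* Let $p$ be a prime and $b$ an integer with $1<b<\frac{p-1}{2}$. Then $|\mathrm{inv}_{1,b}|>4$.
   Context: Let $S=\mathbb{C}[x_1,x_2]$, $\zeta=e^{2\pi i/p}$, $G=\mathbb{Z}/p\mathbb{Z}=\langle\zeta\rangle$ acting on $S$ by $x_1\mapsto\zeta x_1$, $x_2\mapsto\zeta^bx_2$, with invariant ring $S^G_{1,b}$ (spanned by monomials $x_1^cx_2^d$ with $c+bd\equiv0\pmod p$). $\mathrm{inv}_{1,b}$ denotes the minimal set of monomial generators of $S^G_{1,b}$ as a $\mathbb{C}$-algebra: the nonconstant invariant monomials that are not a product of two nonconstant invariant monomials. *)

theory Defs
  imports "HOL-Number_Theory.Number_Theory"
begin

text \<open>A monomial x1^c x2^d of C[x1,x2] is represented by its exponent pair (c,d).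
  It is invariant under the action x1 -> zeta x1, x2 -> zeta^b x2 of Z/pZ iff
  c + b d = 0 (mod p).\<close>

definition invariant_monomial :: "nat \<Rightarrow> int \<Rightarrow> nat \<times> nat \<Rightarrow> bool" where
  "invariant_monomial p b m \<longleftrightarrow> [int (fst m) + b * int (snd m) = 0] (mod int p)"

definition nonconstant :: "nat \<times> nat \<Rightarrow> bool" where
  "nonconstant m \<longleftrightarrow> m \<noteq> (0, 0)"

text \<open>Minimal monomial generators: nonconstant invariant monomials that are not
  a product of two nonconstant invariant monomials (product = sum of exponents).\<close>

definition inv_gens :: "nat \<Rightarrow> int \<Rightarrow> (nat \<times> nat) set" where
  "inv_gens p b = {m. nonconstant m \<and> invariant_monomial p b m \<and>
     \<not> (\<exists>m1 m2. nonconstant m1 \<and> invariant_monomial p b m1 \<and>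
                 nonconstant m2 \<and> invariant_monomial p b m2 \<and>
                 m = (fst m1 + fst m2, snd m1 + snd m2))}"

end

theory Submission
  imports Defs
begin

lemma mem_inv_gensI:
  assumes "\<not> (\<exists>m1 m2. nonconstant m1 \<and> invariant_monomial p b m1 \<and>
                 nonconstant m2 \<and> invariant_monomial p b m2 \<and>
                 m = (fst m1 + fst m2, snd m1 + snd m2))"
    "invariant_monomial p b m" "nonconstant m"
  shows "m \<in> inv_gens p b"
  using assms unfolding inv_gens_def by blast

lemma weight_ge:
  assumes "invariant_monomial p b m" "nonconstant m" "b > 0"
  shows "int (fst m) + b * int (snd m) \<ge> int p"
proof -
  obtain c d where m: "m = (c,d)" by (cases m)
  have pos: "int c + b * int d > 0" using assms m unfolding nonconstant_def
    by (cases "d = 0") (auto intro: add_nonneg_pos mult_pos_pos)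
  have "int p dvd int c + b * int d" using assms(1) m
    unfolding invariant_monomial_def by (simp add: cong_0_iff)
  then show ?thesis using pos m by (simp add: zdvd_imp_le)
qed

lemma zero_c:
  assumes "invariant_monomial p b m" "nonconstant m" "fst m = 0" "prime p"
    "0 < b" "b < int p"
  shows "snd m \<ge> p"
proof -
  obtain d where m: "m = (0,d)" using assms(3) by (cases m) auto
  have d0: "d > 0" using assms(2) m unfolding nonconstant_def by auto
  have "int p dvd b * int d" using assms(1) m
    unfolding invariant_monomial_def by (simp add: cong_0_iff)
  moreover have "\<not> int p dvd b" using assms(5,6) by (simp add: zdvd_not_zless)
  moreover have "prime (int p)" using assms(4) by simp
  ultimately have "int p dvd int d" using prime_dvd_mult_iff by blast
  then have "p dvd d" by simp
  then show ?thesis using d0 m by (simp add: dvd_imp_le)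
qed

lemma gen_by_weight:
  assumes "invariant_monomial p b m" "nonconstant m" "b > 0"
    "int (fst m) + b * int (snd m) < 2 * int p"
  shows "m \<in> inv_gens p b"
proof -
  have "\<not> (\<exists>m1 m2. nonconstant m1 \<and> invariant_monomial p b m1 \<and>
                 nonconstant m2 \<and> invariant_monomial p b m2 \<and>
                 m = (fst m1 + fst m2, snd m1 + snd m2))"
  proof
    assume "\<exists>m1 m2. nonconstant m1 \<and> invariant_monomial p b m1 \<and>
                 nonconstant m2 \<and> invariant_monomial p b m2 \<and>
                 m = (fst m1 + fst m2, snd m1 + snd m2)"
    then obtain m1 m2 where h: "nonconstant m1" "invariant_monomial p b m1"
      "nonconstant m2" "invariant_monomial p b m2"
      "m = (fst m1 + fst m2, snd m1 + snd m2)" by blast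
    have "int (fst m1) + b * int (snd m1) \<ge> int p" using weight_ge h assms(3) by blast
    moreover have "int (fst m2) + b * int (snd m2) \<ge> int p" using weight_ge h assms(3) by blast
    ultimately show False using assms(4) h(5) by (simp add: algebra_simps)
  qed
  then show ?thesis using assms unfolding inv_gens_def by blast
qed

lemma gen_c1:
  assumes "invariant_monomial p b (1,d)" "prime p" "0 < b" "b < int p" "d < p"
  shows "(1,d) \<in> inv_gens p b"
proof -
  have "\<not> (\<exists>m1 m2. nonconstant m1 \<and> invariant_monomial p b m1 \<and>
                 nonconstant m2 \<and> invariant_monomial p b m2 \<and>
                 (1,d) = (fst m1 + fst m2, snd m1 + snd m2))"
  proof
    assume "\<exists>m1 m2. nonconstant m1 \<and> invariant_monomial p b m1 \<and>
                 nonconstant m2 \<and> invariant_monomial p b m2 \<and>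
                 (1,d) = (fst m1 + fst m2, snd m1 + snd m2)"
    then obtain m1 m2 where h: "nonconstant m1" "invariant_monomial p b m1"
      "nonconstant m2" "invariant_monomial p b m2"
      "(1,d) = (fst m1 + fst m2, snd m1 + snd m2)" by blast
    show False
    proof (cases "fst m1 = 0")
      case True
      then have "snd m1 \<ge> p" using zero_c[OF h(2) h(1) True assms(2,3,4)] by blast
      then show False using h(5) assms(5) by simp
    next
      case False
      then have "fst m2 = 0" using h(5) by simp
      then have "snd m2 \<ge> p" using zero_c[OF h(4) h(3) _ assms(2,3,4)] by blast
      then show False using h(5) assms(5) by simp
    qed
  qed
  then show ?thesis by (rule mem_inv_gensI) (use assms(1) in \<open>simp_all add: nonconstant_def\<close>)
qed

lemma no_decomp:
  assumes "m \<in> inv_gens p b" "nonconstant m1" "invariant_monomial p b m1"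
    "nonconstant m2" "invariant_monomial p b m2" "m = (fst m1 + fst m2, snd m1 + snd m2)"
  shows False
  using assms unfolding inv_gens_def mem_Collect_eq by blast

lemma bounded:
  assumes "m \<in> inv_gens p b" "p > 0"
  shows "m \<in> {0..p} \<times> {0..p}"
proof (rule ccontr)
  assume nb: "m \<notin> {0..p} \<times> {0..p}"
  obtain c d where m: "m = (c,d)" by (cases m)
  have inv: "[int c + b * int d = 0] (mod int p)"
    using assms m unfolding inv_gens_def invariant_monomial_def by simp
  show False
  proof (cases "c > p")
    case True
    have i1: "invariant_monomial p b (p,0)"
      unfolding invariant_monomial_def by (simp add: cong_0_iff)
    have i2: "invariant_monomial p b (c-p,d)"
    proof -
      have "[int p = 0] (mod int p)" by (simp add: cong_0_iff)
      with inv have "[int c + b * int d - int p = 0 - 0] (mod int p)" by (rule cong_diff)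
      moreover have "int (c - p) = int c - int p" using True by simp
      ultimately show ?thesis unfolding invariant_monomial_def by (simp add: algebra_simps)
    qed
    have n1: "nonconstant (p,0)" using assms(2) by (simp add: nonconstant_def)
    have n2: "nonconstant (c-p,d)" using True by (simp add: nonconstant_def)
    have e: "m = (fst (p,0::nat) + fst (c-p,d), snd (p,0::nat) + snd (c-p,d))"
      using m True by simp
    show False by (rule no_decomp[OF assms(1) n1 i1 n2 i2 e])
  next
    case False
    then have dp: "d > p" using nb m by auto
    have i1: "invariant_monomial p b (0,p)"
      unfolding invariant_monomial_def by (simp add: cong_0_iff)
    have i2: "invariant_monomial p b (c,d-p)"
    proof -
      have "[b * int p = 0] (mod int p)" by (simp add: cong_0_iff)
      with inv have "[int c + b * int d - b * int p = 0 - 0] (mod int p)" by (rule cong_diff)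
      moreover have "int (d - p) = int d - int p" using dp by simp
      ultimately show ?thesis unfolding invariant_monomial_def by (simp add: algebra_simps)
    qed
    have n1: "nonconstant (0,p)" using assms(2) by (simp add: nonconstant_def)
    have n2: "nonconstant (c,d-p)" using dp by (simp add: nonconstant_def)
    have e: "m = (fst (0::nat,p) + fst (c,d-p), snd (0::nat,p) + snd (c,d-p))"
      using m dp by simp
    show False by (rule no_decomp[OF assms(1) n1 i1 n2 i2 e])
  qed
qed

theorem lemma3p15:
  fixes p :: nat and b :: int
  assumes "prime p"
    and "1 < b"
    and "real_of_int b < (real p - 1) / 2"
  shows "card (inv_gens p b) > 4"
proof -
  have b2r: "real_of_int (2 * b + 1) < real_of_int (int p)" using assms(3) by simp
  have b2: "2 * b + 1 < int p" using b2r by (simp only: of_int_less_iff)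
  have b0: "b > 0" "b < int p" using assms(2) b2 by auto
  have pp: "p > 0" using assms(1) prime_gt_0_nat by blast
  have fin: "finite (inv_gens p b)"
  proof (rule finite_subset)
    show "inv_gens p b \<subseteq> {0..p} \<times> {0..p}" using bounded[OF _ pp] by blast
  qed simp
  have coprime: "coprime b (int p)"
  proof -
    have "\<not> int p dvd b" using b0 by (simp add: zdvd_not_zless)
    moreover have "prime (int p)" using assms(1) by simp
    ultimately have "coprime (int p) b" using prime_imp_coprime by blast
    then show ?thesis by (simp add: coprime_commute)
  qed
  obtain x where x: "[b * x = 1] (mod int p)" using cong_solve_coprime_int[OF coprime] by blast
  define d where "d = nat ((- x) mod int p)"
  have dint: "int d = (- x) mod int p" unfolding d_def using pp by simp
  have "int d < int p" using dint pp by simp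
  then have dlt: "d < p" by simp
  have inv1: "invariant_monomial p b (1,d)"
  proof -
    have "[int d = - x] (mod int p)" using dint by (simp add: cong_def)
    then have "[b * int d = b * (- x)] (mod int p)" by (rule cong_scalar_left)
    moreover have "[b * (-x) = -1] (mod int p)" using x cong_minus_minus_iff[of "b * x" 1 "int p"] by simp
    ultimately have "[b * int d = -1] (mod int p)" by (rule cong_trans)
    then have "[1 + b * int d = 1 + -1] (mod int p)" by (rule cong_add[OF cong_refl])
    then show ?thesis unfolding invariant_monomial_def by simp
  qed
  define b' where "b' = nat b"
  have bb: "b = int b'" using b0 unfolding b'_def by simp
  have bn: "2 * b' + 1 < p" "b' \<ge> 2" using b2 bb assms(2) by linarith+
  have g1: "(p,0) \<in> inv_gens p b"
    apply (rule gen_by_weight)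
    using b0 pp by (auto simp: invariant_monomial_def nonconstant_def cong_0_iff)
  have g2: "(0,p) \<in> inv_gens p b"
  proof -
    have "\<not> (\<exists>m1 m2. nonconstant m1 \<and> invariant_monomial p b m1 \<and>
                 nonconstant m2 \<and> invariant_monomial p b m2 \<and>
                 (0,p) = (fst m1 + fst m2, snd m1 + snd m2))"
    proof
      assume "\<exists>m1 m2. nonconstant m1 \<and> invariant_monomial p b m1 \<and>
                 nonconstant m2 \<and> invariant_monomial p b m2 \<and>
                 (0,p) = (fst m1 + fst m2, snd m1 + snd m2)"
      then obtain m1 m2 where h: "nonconstant m1" "invariant_monomial p b m1"
        "nonconstant m2" "invariant_monomial p b m2"
        "(0,p) = (fst m1 + fst m2, snd m1 + snd m2)" by blast
      have f: "fst m1 = 0" "fst m2 = 0" using h(5) by auto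
      have "snd m1 \<ge> p" using zero_c[OF h(2) h(1) f(1) assms(1) b0] .
      moreover have "snd m2 \<ge> p" using zero_c[OF h(4) h(3) f(2) assms(1) b0] .
      ultimately show False using h(5) pp by simp
    qed
    moreover have "invariant_monomial p b (0,p)" unfolding invariant_monomial_def
      by (simp add: cong_0_iff)
    moreover have "nonconstant (0,p)" using pp by (simp add: nonconstant_def)
    ultimately show ?thesis by (rule mem_inv_gensI)
  qed
  have w3: "int (p - b') + b * int 1 = int p" using bn bb by simp
  have i3: "invariant_monomial p b (p - b', 1)"
    unfolding invariant_monomial_def fst_conv snd_conv w3 by (simp add: cong_0_iff)
  have n3: "nonconstant (p - b', 1)" by (simp add: nonconstant_def)
  have l3: "int (fst (p - b', 1)) + b * int (snd (p - b', 1)) < 2 * int p"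
    unfolding fst_conv snd_conv w3 using pp by simp
  have g3: "(p - b', 1) \<in> inv_gens p b" using gen_by_weight[OF i3 n3 b0(1) l3] .
  have w4: "int (p - 2*b') + b * int 2 = int p" using bn bb by simp
  have i4: "invariant_monomial p b (p - 2*b', 2)"
    unfolding invariant_monomial_def fst_conv snd_conv w4 by (simp add: cong_0_iff)
  have n4: "nonconstant (p - 2*b', 2)" by (simp add: nonconstant_def)
  have l4: "int (fst (p - 2*b', 2)) + b * int (snd (p - 2*b', 2)) < 2 * int p"
    unfolding fst_conv snd_conv w4 using pp by simp
  have g4: "(p - 2*b', 2) \<in> inv_gens p b" using gen_by_weight[OF i4 n4 b0(1) l4] .
  have g5: "(1, d) \<in> inv_gens p b" using gen_c1[OF inv1 assms(1) b0 dlt] .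
  have sub: "{(p,0), (0,p), (p - b', 1), (p - 2*b', 2), (1,d)} \<subseteq> inv_gens p b"
    using g1 g2 g3 g4 g5 by blast
  have "p - b' \<noteq> 1" "p - 2*b' \<noteq> 1" using bn by linarith+
  have "distinct [(p,0), (0,p), (p - b', 1), (p - 2*b', 2), (1,d)]"
    using bn \<open>p - b' \<noteq> 1\<close> \<open>p - 2*b' \<noteq> 1\<close> by simp
  then have "card (set [(p,0), (0,p), (p - b', 1), (p - 2*b', 2), (1,d)]) = 5"
    by (simp only: distinct_card) simp
  then have "card {(p,0), (0,p), (p - b', 1), (p - 2*b', 2), (1,d)} = 5" by simp
  then show ?thesis using card_mono[OF fin sub] by simp
qed

end
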